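(* Let $q$ be a prime power, let $k\geq 2$ and $r>4$ be integers, and let $n=rk$. Let $\gamma\in\mathbb{F}_{q^n}$ be a root of an irreducible polynomial of degree $r$ over $\mathbb{F}_{q^k}$. For each pair $(\tau,\delta)\in\mathbb{F}_{q^k}^*\times\mathbb{F}_{q^k}^*$ let $$U_{\tau,\delta}=\{u+(u^q+u)\tau\gamma+(u^q+u)\delta\gamma^2\mid u\in\mathbb{F}_{q^k}\},$$ and list these $(q^k-1)^2$ subspaces as $U_1,\dots,U_{(q^k-1)^2}$. Then the code $$\mathcal{C}=\bigcup_{i=1}^{(q^k-1)^2}\{\alpha U_i\mid\alpha\in\mathbb{F}_{q^n}^*\}$$ is a cyclic constant dimension subspace code with cardinality $(q^k-1)^2\frac{q^n-1}{q-1}$ and minimum distance $2k-2$.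
   Context: $\mathbb{F}_{q^n}$ is viewed as an $n$-dimensional vector space over $\mathbb{F}_q$. For $\mathbb{F}_q$-subspaces $U,V$ of $\mathbb{F}_{q^n}$, the subspace distance is $d(U,V)=\dim U+\dim V-2\dim(U\cap V)$. A subspace code is a nonempty set of $\mathbb{F}_q$-subspaces of $\mathbb{F}_{q^n}$; it is constant dimension if all its members have the same dimension; its minimum distance is $\min\{d(U,V)\mid U,V\in\mathcal{C},U\neq V\}$. The orbit of $U$ is $\{\alpha U\mid\alpha\in\mathbb{F}_{q^n}^*\}$, and a code is cyclic if it is a union of orbits. *)

theory Defs
  imports Main "HOL-Computational_Algebra.Polynomial" "HOL-Computational_Algebra.Primes"
begin

definition prime_power :: "nat \<Rightarrow> bool" where
  "prime_power q \<longleftrightarrow> (\<exists>p m. prime p \<and> m > 0 \<and> q = p ^ m)"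

definition subfield_of_order :: "nat \<Rightarrow> 'a::field set" where
  "subfield_of_order Q = {x. x ^ Q = x}"

definition Fq_span :: "nat \<Rightarrow> 'a::field set \<Rightarrow> 'a set" where
  "Fq_span q B = {(\<Sum>b\<in>B. c b * b) | c. \<forall>b\<in>B. c b \<in> subfield_of_order q}"

definition Fq_subspace :: "nat \<Rightarrow> 'a::field set \<Rightarrow> bool" where
  "Fq_subspace q U \<longleftrightarrow> 0 \<in> U \<and> (\<forall>x\<in>U. \<forall>y\<in>U. x + y \<in> U)
     \<and> (\<forall>c\<in>subfield_of_order q. \<forall>x\<in>U. c * x \<in> U)"

definition Fq_dim :: "nat \<Rightarrow> 'a::field set \<Rightarrow> nat" where
  "Fq_dim q U = (LEAST d. \<exists>B. B \<subseteq> U \<and> finite B \<and> card B = d \<and> Fq_span q B = U)"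

definition subspace_dist :: "nat \<Rightarrow> 'a::field set \<Rightarrow> 'a set \<Rightarrow> nat" where
  "subspace_dist q U V = Fq_dim q U + Fq_dim q V - 2 * Fq_dim q (U \<inter> V)"

definition subspace_code :: "nat \<Rightarrow> 'a::field set set \<Rightarrow> bool" where
  "subspace_code q C \<longleftrightarrow> C \<noteq> {} \<and> (\<forall>U\<in>C. Fq_subspace q U)"

definition constant_dimension :: "nat \<Rightarrow> 'a::field set set \<Rightarrow> bool" where
  "constant_dimension q C \<longleftrightarrow> (\<exists>d. \<forall>U\<in>C. Fq_dim q U = d)"

definition min_distance :: "nat \<Rightarrow> 'a::field set set \<Rightarrow> nat" where
  "min_distance q C = Min {subspace_dist q U V | U V. U \<in> C \<and> V \<in> C \<and> U \<noteq> V}"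

definition orbit :: "'a::field set \<Rightarrow> 'a set set" where
  "orbit U = {(\<lambda>x. \<alpha> * x) ` U | \<alpha>. \<alpha> \<noteq> 0}"

definition cyclic_code :: "'a::field set set \<Rightarrow> bool" where
  "cyclic_code C \<longleftrightarrow> (\<exists>S. C = (\<Union>U\<in>S. orbit U))"

definition irreducible_over :: "'a::field set \<Rightarrow> 'a poly \<Rightarrow> bool" where
  "irreducible_over K p \<longleftrightarrow> (\<forall>i. coeff p i \<in> K) \<and> degree p > 0 \<and>
     (\<forall>f g. (\<forall>i. coeff f i \<in> K) \<longrightarrow> (\<forall>i. coeff g i \<in> K) \<longrightarrow> p = f * g
        \<longrightarrow> degree f = 0 \<or> degree g = 0)"

definition U_td :: "nat \<Rightarrow> nat \<Rightarrow> 'a::field \<Rightarrow> 'a \<Rightarrow> 'a \<Rightarrow> 'a set" where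
  "U_td q k \<gamma> \<tau> \<delta> = (\<lambda>u. u + (u ^ q + u) * \<tau> * \<gamma> + (u ^ q + u) * \<delta> * \<gamma>\<^sup>2)
      ` subfield_of_order (q ^ k)"

end

theory Submission
  imports Defs "HOL-Library.FuncSet"
begin
lemma card_UNIV_times_zero:
  fixes x :: "'a::{finite,ring_1}"
  shows "of_nat (card (UNIV::'a set)) * x = 0"
proof -
  have "(\<Sum>y\<in>UNIV. y + x) = (\<Sum>y\<in>UNIV. y)"
    by (rule sum.reindex_bij_witness[of _ "\<lambda>y. y - x" "\<lambda>y. y + x"]) auto
  moreover have "(\<Sum>y\<in>UNIV. y + x) = (\<Sum>y\<in>UNIV. y) + of_nat (card (UNIV::'a set)) * x"
    by (simp add: sum.distrib)
  ultimately show ?thesis by simp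
qed

lemma pow_card_same:
  fixes x :: "'a::{field,finite}"
  shows   "x ^ card (UNIV :: 'a set) = x"
proof (cases "x = 0")
  case False
  have "x * (\<Prod>y\<in>UNIV-{0}. x * y) = x * x ^ (card (UNIV :: 'a set) - 1) * \<Prod>(UNIV-{0})"
    by (simp add: prod.distrib mult_ac)
  also have "x * x ^ (card (UNIV :: 'a set) - 1) = x ^ Suc (card (UNIV :: 'a set) - 1)"
    by (subst power_Suc) auto
  also have "Suc (card (UNIV :: 'a set) - 1) = card (UNIV :: 'a set)"
    using finite_UNIV_card_ge_0[where ?'a = 'a] by simp
  also have "(\<Prod>y\<in>UNIV-{0}. x * y) = (\<Prod>y\<in>UNIV-{0}. y)"
    by (rule prod.reindex_bij_witness[of _ "\<lambda>y. y / x" "\<lambda>y. x * y"]) (use False in auto)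
  finally show ?thesis
    by simp
qed (use finite_UNIV_card_ge_0[where ?'a = 'a] in auto)

lemma sum_closed_set:
  assumes "0 \<in> U" "\<forall>x\<in>U. \<forall>y\<in>U. x + y \<in> U" "\<forall>b\<in>S. g b \<in> U"
  shows "sum g S \<in> U"
  using assms(3)
proof (induction S rule: infinite_finite_induct)
  case (insert x F) then show ?case using assms(1,2) by simp
qed (use assms in auto)

locale ffq =
  fixes q P m N :: nat and ty :: "'a::{field,finite} itself"
  assumes P_prime: "prime P" and m_pos: "m > 0" and q_def: "q = P ^ m"
    and card_F: "card (UNIV::'a set) = q ^ N" and N_pos: "N > 0"
begin

lemma q_gt1: "q > 1"
  using P_prime m_pos q_def by (metis One_nat_def prime_gt_1_nat less_one not_less_eq one_less_power)

lemma CHAR_eq: "CHAR('a) = P"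
proof -
  have "of_nat (card (UNIV::'a set)) = (0::'a)"
    using card_UNIV_times_zero[of "1::'a"] by simp
  hence "CHAR('a) dvd card (UNIV::'a set)"
    by (simp only: of_nat_eq_0_iff_char_dvd)
  hence "CHAR('a) dvd P ^ (m * N)"
    by (simp add: card_F q_def power_mult)
  moreover have "prime CHAR('a)"
    by (simp add: finite_imp_CHAR_pos prime_CHAR_semidom)
  ultimately have "CHAR('a) dvd P" using prime_dvd_power by blast
  thus ?thesis using \<open>prime CHAR('a)\<close> P_prime
    by (simp add: primes_dvd_imp_eq)
qed

lemma frob_add: "(x + y :: 'a) ^ (q ^ j) = x ^ (q ^ j) + y ^ (q ^ j)"
proof -
  have "q ^ j = CHAR('a) ^ (m * j)" by (simp add: CHAR_eq q_def power_mult)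
  thus ?thesis
    by (intro freshmans_dream') (auto simp: finite_imp_CHAR_pos prime_CHAR_semidom)
qed

lemma frob_neg: "(- x :: 'a) ^ (q ^ j) = - (x ^ (q ^ j))"
proof -
  have "(- x) ^ (q ^ j) + x ^ (q ^ j) = 0"
    using frob_add[of "-x" x j] q_gt1 by (simp add: zero_power)
  thus ?thesis by (simp add: eq_neg_iff_add_eq_0)
qed

lemma frob_diff: "(x - y :: 'a) ^ (q ^ j) = x ^ (q ^ j) - y ^ (q ^ j)"
  using frob_add[of x "-y" j] frob_neg[of y j] by simp

lemma frob_add1: "(x + y :: 'a) ^ q = x ^ q + y ^ q"
  using frob_add[of x y 1] by simp

lemma frob_neg1: "(- x :: 'a) ^ q = - (x ^ q)"
  using frob_neg[of x 1] by simp

lemma frob_diff1: "(x - y :: 'a) ^ q = x ^ q - y ^ q"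
  using frob_diff[of x y 1] by simp

abbreviation Sf :: "nat \<Rightarrow> 'a set" where "Sf j \<equiv> subfield_of_order (q ^ j)"

lemma Sf_mem: "x \<in> Sf j \<longleftrightarrow> x ^ (q ^ j) = x"
  by (simp add: subfield_of_order_def)

lemma Sf_0[simp]: "0 \<in> Sf j" using q_gt1 by (simp add: Sf_mem)
lemma Sf_1[simp]: "1 \<in> Sf j" by (simp add: Sf_mem)
lemma Sf_add: "x \<in> Sf j \<Longrightarrow> y \<in> Sf j \<Longrightarrow> x + y \<in> Sf j"
  by (simp add: Sf_mem frob_add)
lemma Sf_neg: "x \<in> Sf j \<Longrightarrow> - x \<in> Sf j"
  by (simp add: Sf_mem frob_neg)
lemma Sf_diff: "x \<in> Sf j \<Longrightarrow> y \<in> Sf j \<Longrightarrow> x - y \<in> Sf j"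
  by (simp add: Sf_mem frob_diff)
lemma Sf_mult: "x \<in> Sf j \<Longrightarrow> y \<in> Sf j \<Longrightarrow> x * y \<in> Sf j"
  by (simp add: Sf_mem power_mult_distrib)
lemma Sf_inverse: "x \<in> Sf j \<Longrightarrow> inverse x \<in> Sf j"
  by (simp add: Sf_mem power_inverse)
lemma Sf_divide: "x \<in> Sf j \<Longrightarrow> y \<in> Sf j \<Longrightarrow> x / y \<in> Sf j"
  by (simp add: Sf_mem power_divide)
lemma Sf_pow: "x \<in> Sf j \<Longrightarrow> x ^ i \<in> Sf j"
  by (induction i) (auto intro: Sf_mult)

lemma Fq_mem: "x \<in> subfield_of_order q \<longleftrightarrow> x ^ q = x"
  by (simp add: subfield_of_order_def)

lemma Sf1_sub: "x \<in> subfield_of_order q \<Longrightarrow> x \<in> Sf j"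
proof (induction j)
  case (Suc j)
  hence "x ^ q = x" "x ^ (q ^ j) = x" by (auto simp: Sf_mem Fq_mem)
  hence "x ^ (q ^ Suc j) = x" by (metis power_Suc power_mult mult.commute)
  thus ?case by (simp only: Sf_mem)
qed (simp add: subfield_of_order_def)

lemma frob_Fq_mult: "c \<in> subfield_of_order q \<Longrightarrow> (c * x) ^ q = c * x ^ q"
  by (simp add: Fq_mem power_mult_distrib)

end

lemma card_pow_eq_one_le:
  assumes "d > 0"
  shows "card {x::'a::field. x ^ d = 1} \<le> d"
proof -
  let ?P = "monom (1::'a) d - 1"
  have c: "coeff ?P d = 1" using assms by (simp add: coeff_monom)
  hence nz: "?P \<noteq> 0" by (metis coeff_0 zero_neq_one)
  have dg: "degree ?P \<le> d" by (intro degree_diff_le) (auto simp: degree_monom_le)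
  have "{x::'a. x ^ d = 1} = {x. poly ?P x = 0}" by (simp add: poly_monom)
  also have "card \<dots> \<le> degree ?P" by (rule card_poly_roots_bound[OF nz])
  finally show ?thesis using dg by simp
qed

lemma card_geo_roots_le:
  assumes "d > 0" "e > 0"
  shows "card {x::'a::field. (\<Sum>i<e. (x ^ d) ^ i) = 0} \<le> d * (e - 1)"
proof -
  let ?T = "\<Sum>i<e. monom (1::'a) (d * i)"
  have "coeff ?T 0 = (\<Sum>i<e. if i = 0 then 1 else 0)"
    using assms(1) by (auto simp add: coeff_sum coeff_monom intro!: sum.cong)
  also have "\<dots> = 1" using assms(2) by (simp add: sum.delta)
  finally have nz: "?T \<noteq> 0" by auto
  have dg: "degree ?T \<le> d * (e - 1)"
    by (intro degree_sum_le) (auto intro!: order.trans[OF degree_monom_le])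
  have "{x::'a. (\<Sum>i<e. (x ^ d) ^ i) = 0} = {x. poly ?T x = 0}"
    by (simp add: poly_sum poly_monom power_mult)
  also have "card \<dots> \<le> degree ?T" by (rule card_poly_roots_bound[OF nz])
  finally show ?thesis using dg by simp
qed

context ffq
begin

lemma nonzero_pow_M: "x \<noteq> (0::'a) \<Longrightarrow> x ^ (q ^ N - 1) = 1"
proof -
  assume x: "x \<noteq> 0"
  have "q ^ N = Suc (q ^ N - 1)" using q_gt1 by simp
  hence "x * x ^ (q ^ N - 1) = x * 1"
    using pow_card_same[of x] card_F by (metis power_Suc mult_1_right)
  thus ?thesis using x by simp
qed

lemma card_Sf:
  assumes "j > 0" "j dvd N"
  shows "card (Sf j) = q ^ j"
proof -
  define d where "d = q ^ j - 1"
  define M where "M = q ^ N - 1"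
  obtain t where t: "N = j * t" using assms by blast
  have tpos: "t > 0" using t N_pos by (cases t) auto
  define e where "e = (\<Sum>i<t. (q ^ j) ^ i)"
  have "int M = int (q ^ j) ^ t - 1" unfolding M_def t using q_gt1
    by (simp add: of_nat_diff power_mult)
  also have "\<dots> = (int (q ^ j) - 1) * (\<Sum>i<t. int (q ^ j) ^ i)"
    by (rule power_diff_1_eq)
  also have "\<dots> = int d * int e" unfolding d_def e_def using q_gt1
    by (simp add: of_nat_diff)
  finally have "int M = int (d * e)" by simp
  hence Mde: "M = d * e" by (simp only: of_nat_eq_iff)
  have dpos: "d > 0" unfolding d_def using one_less_power[of q j] q_gt1 assms(1)
    by simp
  have "(q ^ j) ^ 0 \<le> e" unfolding e_def by (rule member_le_sum) (use tpos in auto)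
  hence epos: "e > 0" by simp
  define R where "R = {x::'a. x ^ d = 1}"
  define Z where "Z = {x::'a. (\<Sum>i<e. (x ^ d) ^ i) = 0}"
  have sub: "UNIV - {0} \<subseteq> R \<union> Z"
  proof
    fix x :: 'a assume "x \<in> UNIV - {0}"
    hence "x ^ M = 1" using nonzero_pow_M M_def by auto
    hence "(x ^ d) ^ e - 1 = 0" by (simp add: Mde power_mult)
    hence "(x ^ d - 1) * (\<Sum>i<e. (x ^ d) ^ i) = 0" by (simp add: power_diff_1_eq)
    thus "x \<in> R \<union> Z" unfolding R_def Z_def by auto
  qed
  have "M = card (UNIV - {0::'a})" using card_F M_def by (simp add: card_Diff_singleton)
  also have "\<dots> \<le> card (R \<union> Z)" by (intro card_mono sub) auto
  also have "\<dots> \<le> card R + card Z" by (rule card_Un_le)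
  also have "card Z \<le> d * (e - 1)" unfolding Z_def by (rule card_geo_roots_le[OF dpos epos])
  finally have "d * e \<le> card R + d * (e - 1)" using Mde by simp
  moreover have "d * e = d * (e - 1) + d" using epos
    by (metis Suc_diff_1 add.commute mult_Suc_right)
  ultimately have "d \<le> card R" by simp
  moreover have "card R \<le> d" unfolding R_def by (rule card_pow_eq_one_le[OF dpos])
  ultimately have cR: "card R = d" by simp
  have "Sf j = insert 0 R"
  proof (intro set_eqI iffI)
    fix x assume "x \<in> Sf j"
    hence "x ^ Suc d = x" unfolding d_def Sf_mem using q_gt1 by simp
    thus "x \<in> insert 0 R" unfolding R_def by auto
  next
    fix x assume "x \<in> insert 0 R"
    hence "x ^ Suc d = x" unfolding R_def by auto
    thus "x \<in> Sf j" unfolding d_def Sf_mem using q_gt1 by simp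
  qed
  moreover have "0 \<notin> R" unfolding R_def using dpos by (simp add: zero_power)
  ultimately have "card (Sf j) = Suc d" using cR by simp
  thus ?thesis unfolding d_def using q_gt1 by simp
qed

lemma card_Fq: "card (subfield_of_order q :: 'a set) = q"
  using card_Sf[of 1] by simp

end

context ffq
begin

abbreviation Fq :: "'a set" where "Fq \<equiv> subfield_of_order q"

lemma Fq_0[simp]: "0 \<in> Fq" and Fq_1[simp]: "1 \<in> Fq"
  using Sf_0[of 1] Sf_1[of 1] by auto
lemma Fq_add: "x \<in> Fq \<Longrightarrow> y \<in> Fq \<Longrightarrow> x + y \<in> Fq"
  using Sf_add[of x 1 y] by simp
lemma Fq_neg: "x \<in> Fq \<Longrightarrow> - x \<in> Fq"
  using Sf_neg[of x 1] by simp
lemma Fq_diff: "x \<in> Fq \<Longrightarrow> y \<in> Fq \<Longrightarrow> x - y \<in> Fq"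
  using Sf_diff[of x 1 y] by simp
lemma Fq_mult: "x \<in> Fq \<Longrightarrow> y \<in> Fq \<Longrightarrow> x * y \<in> Fq"
  using Sf_mult[of x 1 y] by simp
lemma Fq_inverse: "x \<in> Fq \<Longrightarrow> inverse x \<in> Fq"
  using Sf_inverse[of x 1] by simp
lemma Fq_divide: "x \<in> Fq \<Longrightarrow> y \<in> Fq \<Longrightarrow> x / y \<in> Fq"
  using Sf_divide[of x 1 y] by simp

lemma span_memI:
  fixes B :: "'a set"
  assumes "\<forall>b\<in>B. c b \<in> Fq" "y = (\<Sum>b\<in>B. c b * b)"
  shows "y \<in> Fq_span q B"
  using assms unfolding Fq_span_def by blast

lemma span_card_le:
  fixes B :: "'a set"
  assumes "finite B"
  shows "card (Fq_span q B) \<le> q ^ card B"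
proof -
  have "Fq_span q B \<subseteq> (\<lambda>c. \<Sum>b\<in>B. c b * b) ` (PiE B (\<lambda>_. Fq))"
  proof
    fix s assume "s \<in> Fq_span q B"
    then obtain c where c: "\<forall>b\<in>B. c b \<in> Fq" "s = (\<Sum>b\<in>B. c b * b)"
      unfolding Fq_span_def by blast
    have "s = (\<Sum>b\<in>B. restrict c B b * b)" unfolding c(2) by (intro sum.cong) auto
    moreover have "restrict c B \<in> PiE B (\<lambda>_. Fq)" using c(1) by auto
    ultimately show "s \<in> (\<lambda>c. \<Sum>b\<in>B. c b * b) ` (PiE B (\<lambda>_. Fq))" by blast
  qed
  hence "card (Fq_span q B) \<le> card ((\<lambda>c. \<Sum>b\<in>B. c b * b) ` (PiE B (\<lambda>_. Fq)))"
    by (intro card_mono) auto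
  also have "\<dots> \<le> card (PiE B (\<lambda>_. Fq))" by (rule card_image_le) (simp add: assms finite_PiE)
  also have "\<dots> = q ^ card B" by (simp add: card_PiE assms card_Fq)
  finally show ?thesis .
qed

lemma span_subset:
  fixes B :: "'a set"
  assumes "Fq_subspace q U" "B \<subseteq> U"
  shows "Fq_span q B \<subseteq> U"
proof
  fix s assume "s \<in> Fq_span q B"
  then obtain c where c: "\<forall>b\<in>B. c b \<in> Fq" "s = (\<Sum>b\<in>B. c b * b)"
    unfolding Fq_span_def by blast
  show "s \<in> U" unfolding c(2)
    by (rule sum_closed_set) (use assms c(1) in \<open>auto simp: Fq_subspace_def\<close>)
qed

lemma span_mem:
  fixes B :: "'a set"
  assumes "finite B" "x \<in> B"
  shows "x \<in> Fq_span q B"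
proof -
  have "(\<Sum>b\<in>B. (if b = x then 1 else 0) * b) = (\<Sum>b\<in>B. if b = x then x else 0)"
    by (rule sum.cong) auto
  also have "\<dots> = x" using assms by simp
  finally have "(\<Sum>b\<in>B. (if b = x then 1 else 0) * b) = x" .
  moreover have "\<forall>b\<in>B. (if b = x then 1 else 0) \<in> Fq" by auto
  ultimately show ?thesis by (intro span_memI[of _ "\<lambda>b. if b = x then 1 else 0"]) auto
qed

lemma span_lin:
  fixes B :: "'a set"
  assumes "s \<in> Fq_span q B" "s' \<in> Fq_span q B" "a \<in> Fq" "a' \<in> Fq"
  shows "a * s + a' * s' \<in> Fq_span q B"
proof -
  obtain c where c: "\<forall>b\<in>B. c b \<in> Fq" "s = (\<Sum>b\<in>B. c b * b)"
    using assms(1) unfolding Fq_span_def by blast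
  obtain c' where c': "\<forall>b\<in>B. c' b \<in> Fq" "s' = (\<Sum>b\<in>B. c' b * b)"
    using assms(2) unfolding Fq_span_def by blast
  have "a * s + a' * s' = (\<Sum>b\<in>B. (a * c b + a' * c' b) * b)"
    unfolding c(2) c'(2) by (simp add: sum_distrib_left sum.distrib algebra_simps)
  moreover have "\<forall>b\<in>B. a * c b + a' * c' b \<in> Fq"
    using c(1) c'(1) assms(3,4) by (auto intro!: Fq_add Fq_mult)
  ultimately show ?thesis by (intro span_memI[of _ "\<lambda>b. a * c b + a' * c' b"]) auto
qed

lemma span_insert:
  fixes B :: "'a set"
  assumes "finite B" "x \<notin> B"
  shows "Fq_span q (insert x B) = (\<lambda>(s, a). s + a * x) ` (Fq_span q B \<times> Fq)"
proof (intro set_eqI iffI)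
  fix y assume "y \<in> Fq_span q (insert x B)"
  then obtain c where c: "\<forall>b\<in>insert x B. c b \<in> Fq" "y = (\<Sum>b\<in>insert x B. c b * b)"
    unfolding Fq_span_def by blast
  have "y = (\<Sum>b\<in>B. c b * b) + c x * x" using c(2) assms by (simp add: add.commute)
  moreover have "(\<Sum>b\<in>B. c b * b) \<in> Fq_span q B" using c(1) unfolding Fq_span_def by auto
  moreover have "c x \<in> Fq" using c(1) by auto
  ultimately show "y \<in> (\<lambda>(s, a). s + a * x) ` (Fq_span q B \<times> Fq)"
    by (intro image_eqI[of _ _ "((\<Sum>b\<in>B. c b * b), c x)"]) auto
next
  fix y assume "y \<in> (\<lambda>(s, a). s + a * x) ` (Fq_span q B \<times> Fq)"
  then obtain s a where sa: "s \<in> Fq_span q B" "a \<in> Fq" "y = s + a * x" by auto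
  then obtain c where c: "\<forall>b\<in>B. c b \<in> Fq" "s = (\<Sum>b\<in>B. c b * b)"
    unfolding Fq_span_def by blast
  let ?c = "c(x := a)"
  have "(\<Sum>b\<in>insert x B. ?c b * b) = a * x + (\<Sum>b\<in>B. ?c b * b)" using assms by simp
  also have "(\<Sum>b\<in>B. ?c b * b) = s" unfolding c(2) using assms(2) by (intro sum.cong) auto
  finally have "y = (\<Sum>b\<in>insert x B. ?c b * b)" using sa(3) by (simp add: add.commute)
  moreover have "\<forall>b\<in>insert x B. ?c b \<in> Fq" using c(1) sa(2) by auto
  ultimately show "y \<in> Fq_span q (insert x B)" by (intro span_memI[of _ ?c]) auto
qed

lemma span_insert_card:
  fixes B :: "'a set"
  assumes "finite B" "x \<notin> Fq_span q B"
  shows "card (Fq_span q (insert x B)) = card (Fq_span q B) * q"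
proof -
  have xB: "x \<notin> B" using assms span_mem by blast
  have inj: "inj_on (\<lambda>(s, a). s + a * x) (Fq_span q B \<times> Fq)"
  proof (rule inj_onI, clarsimp)
    fix s a s' a'
    assume h: "s \<in> Fq_span q B" "a \<in> Fq" "s' \<in> Fq_span q B" "a' \<in> Fq" "s + a * x = s' + a' * x"
    show "s = s' \<and> a = a'"
    proof (cases "a = a'")
      case True thus ?thesis using h by simp
    next
      case False
      have "(a - a') * x = s' - s" using h(5) by (simp add: algebra_simps)
      hence "x = inverse (a - a') * (s' - s)" using False by (simp add: field_simps)
      hence "x = inverse (a - a') * s' + (- inverse (a - a')) * s" by (simp add: algebra_simps)
      moreover have "inverse (a - a') \<in> Fq" "- inverse (a - a') \<in> Fq"
        using h(2,4) by (auto intro!: Fq_inverse Fq_diff Fq_neg)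
      ultimately have "x \<in> Fq_span q B" using span_lin h(1,3) by metis
      thus ?thesis using assms(2) by simp
    qed
  qed
  have "card (Fq_span q (insert x B)) = card (Fq_span q B \<times> Fq)"
    unfolding span_insert[OF assms(1) xB] by (rule card_image[OF inj])
  thus ?thesis by (simp add: card_cartesian_product card_Fq)
qed

lemma span_empty: "Fq_span q ({}::'a set) = {0}"
  unfolding Fq_span_def by auto

lemma exists_indep:
  fixes U :: "'a set"
  assumes "Fq_subspace q U" "card U = q ^ d" "j \<le> d"
  shows "\<exists>B. B \<subseteq> U \<and> finite B \<and> card B = j \<and> card (Fq_span q B) = q ^ j"
  using assms(3)
proof (induction j)
  case 0
  show ?case by (rule exI[of _ "{}"]) (use assms(1) in \<open>auto simp: span_empty Fq_subspace_def\<close>)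
next
  case (Suc j)
  then obtain B where B: "B \<subseteq> U" "finite B" "card B = j" "card (Fq_span q B) = q ^ j" by auto
  have "q ^ j < q ^ d" using Suc.prems q_gt1 by (intro power_strict_increasing) auto
  hence "card (Fq_span q B) < card U" using B(4) assms(2) by simp
  moreover have "Fq_span q B \<subseteq> U" by (rule span_subset[OF assms(1) B(1)])
  ultimately have "\<not> U \<subseteq> Fq_span q B" using card_mono[of "Fq_span q B" U] by auto
  then obtain x where x: "x \<in> U" "x \<notin> Fq_span q B" by blast
  have xB: "x \<notin> B" using x(2) span_mem B(2) by blast
  have "card (Fq_span q (insert x B)) = q ^ Suc j"
    using span_insert_card[OF B(2) x(2)] B(4) by (simp add: mult.commute)
  moreover have "card (insert x B) = Suc j" using B(2,3) xB by simp
  moreover have "insert x B \<subseteq> U" using B(1) x(1) by simp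
  ultimately show ?case using B(2) by blast
qed

lemma dim_eq:
  fixes U :: "'a set"
  assumes "Fq_subspace q U" "card U = q ^ d"
  shows "Fq_dim q U = d"
proof -
  obtain B where B: "B \<subseteq> U" "finite B" "card B = d" "card (Fq_span q B) = q ^ d"
    using exists_indep[OF assms le_refl] by auto
  have "Fq_span q B \<subseteq> U" by (rule span_subset[OF assms(1) B(1)])
  hence spB: "Fq_span q B = U"
    by (rule card_subset_eq[OF finite]) (simp add: B(4) assms(2))
  show ?thesis unfolding Fq_dim_def
  proof (rule Least_equality)
    show "\<exists>B. B \<subseteq> U \<and> finite B \<and> card B = d \<and> Fq_span q B = U" using B spB by blast
  next
    fix d' assume "\<exists>B. B \<subseteq> U \<and> finite B \<and> card B = d' \<and> Fq_span q B = U"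
    then obtain B' where B': "finite B'" "card B' = d'" "Fq_span q B' = U" by blast
    have "q ^ d \<le> q ^ d'" using span_card_le[OF B'(1)] unfolding B'(2) B'(3) assms(2) .
    thus "d \<le> d'" by (rule power_le_imp_le_exp[OF q_gt1])
  qed
qed

end

locale cset = ffq q P m N ty for q P m N and ty :: "'a::{field,finite} itself" +
  fixes k r :: nat and \<gamma> :: 'a and p :: "'a poly"
  assumes k_ge2: "k \<ge> 2" and r_gt4: "r > 4" and N_def: "N = r * k"
    and irr: "irreducible_over (subfield_of_order (q ^ k)) p" and deg_p: "degree p = r"
    and root: "poly p \<gamma> = 0"
begin

abbreviation K :: "'a set" where "K \<equiv> subfield_of_order (q ^ k)"

lemma card_K: "card K = q ^ k"
  using card_Sf[of k] k_ge2 N_def by simp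

lemma div_K:
  assumes hnz: "h \<noteq> 0" and hK: "\<forall>i. coeff h i \<in> K" and hroot: "poly h \<gamma> = 0"
    and hmin: "\<forall>g. g \<noteq> 0 \<longrightarrow> (\<forall>i. coeff g i \<in> K) \<longrightarrow> poly g \<gamma> = 0 \<longrightarrow> degree h \<le> degree g"
  shows "(\<forall>i. coeff Q i \<in> K) \<Longrightarrow> poly Q \<gamma> = 0 \<Longrightarrow> \<exists>S. (\<forall>i. coeff S i \<in> K) \<and> Q = h * S"
proof (induction "degree Q" arbitrary: Q rule: less_induct)
  case less
  show ?case
  proof (cases "Q = 0")
    case True thus ?thesis by (intro exI[of _ 0]) auto
  next
    case False
    have dhpos: "degree h > 0"
    proof (rule ccontr)
      assume "\<not> degree h > 0"
      hence "h = [:coeff h 0:]" by (metis degree_0_id neq0_conv)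
      hence "poly h \<gamma> = coeff h 0" by (metis poly_pCons poly_0 mult_zero_right add.right_neutral)
      moreover have "coeff h 0 \<noteq> 0" using hnz \<open>h = [:coeff h 0:]\<close> by (metis pCons_0_0)
      ultimately show False using hroot by simp
    qed
    have dle: "degree h \<le> degree Q" using hmin False less.prems by blast
    define c where "c = lead_coeff Q / lead_coeff h"
    define e where "e = degree Q - degree h"
    define Q' where "Q' = Q - monom c e * h"
    have cK: "c \<in> K" unfolding c_def using less.prems(1) hK by (auto intro: Sf_divide)
    have Q'K: "\<forall>i. coeff Q' i \<in> K"
      unfolding Q'_def using less.prems(1) hK cK by (auto simp: coeff_monom_mult intro!: Sf_diff Sf_mult)
    have Q'root: "poly Q' \<gamma> = 0" unfolding Q'_def using less.prems(2) hroot by simp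
    have dm: "degree (monom c e * h) \<le> degree Q"
      using degree_mult_le[of "monom c e" h] degree_monom_le[of c e] dle unfolding e_def by linarith
    have dQ'le: "degree Q' \<le> degree Q" unfolding Q'_def using dm by (intro degree_diff_le) auto
    have lhnz: "lead_coeff h \<noteq> 0" using hnz by simp
    have "coeff Q' (degree Q) = lead_coeff Q - c * lead_coeff h"
      unfolding Q'_def using dle by (simp add: coeff_monom_mult e_def)
    also have "\<dots> = 0" unfolding c_def using lhnz by simp
    finally have cQ': "coeff Q' (degree Q) = 0" .
    have dlt: "degree Q' < degree Q"
    proof (cases "Q' = 0")
      case True thus ?thesis using dhpos dle by simp
    next
      case False
      hence "degree Q' \<noteq> degree Q" using cQ' by (metis leading_coeff_0_iff)
      thus ?thesis using dQ'le by simp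
    qed
    obtain S' where S': "\<forall>i. coeff S' i \<in> K" "Q' = h * S'" using less.hyps[OF dlt Q'K Q'root] by blast
    have "Q = h * (S' + monom c e)" using S'(2) unfolding Q'_def by (simp add: algebra_simps)
    moreover have "\<forall>i. coeff (S' + monom c e) i \<in> K" using S'(1) cK by (auto simp: coeff_monom intro: Sf_add)
    ultimately show ?thesis by blast
  qed
qed

lemma indep_fun:
  assumes cK: "\<forall>i<5. c i \<in> K" and z: "(\<Sum>i<5. c i * \<gamma> ^ i) = 0"
  shows "\<forall>i<5. c i = 0"
proof (rule ccontr)
  assume "\<not> (\<forall>i<5. c i = 0)"
  then obtain j where j: "j < 5" "c j \<noteq> 0" by auto
  define g where "g = (\<Sum>i<5. monom (c i) i)"
  have cg: "coeff g i = (if i < 5 then c i else 0)" for i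
    unfolding g_def coeff_sum coeff_monom by (simp add: sum.delta)
  have gK: "\<forall>i. coeff g i \<in> K" using cK by (simp add: cg)
  have gnz: "g \<noteq> 0" using j cg[of j] by auto
  have groot: "poly g \<gamma> = 0" unfolding g_def using z by (simp add: poly_sum poly_monom)
  have dg: "degree g \<le> 4" unfolding g_def
    by (intro degree_sum_le) (auto intro!: order.trans[OF degree_monom_le])
  define Good where "Good = (\<lambda>h. h \<noteq> 0 \<and> (\<forall>i. coeff h i \<in> K) \<and> poly h \<gamma> = 0)"
  have "Good g" unfolding Good_def using gnz gK groot by blast
  then obtain h where h: "Good h" "\<forall>g. Good g \<longrightarrow> degree h \<le> degree g"
    using ex_has_least_nat[of Good g degree] by blast
  have hnz: "h \<noteq> 0" and hK: "\<forall>i. coeff h i \<in> K" and hroot: "poly h \<gamma> = 0"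
    using h(1) unfolding Good_def by auto
  have hmin: "\<forall>g. g \<noteq> 0 \<longrightarrow> (\<forall>i. coeff g i \<in> K) \<longrightarrow> poly g \<gamma> = 0 \<longrightarrow> degree h \<le> degree g"
    using h(2) unfolding Good_def by blast
  have "degree h \<le> degree g" using h(2) \<open>Good g\<close> by blast
  hence dh: "degree h \<le> 4" using dg by linarith
  have dhpos: "degree h > 0"
  proof (rule ccontr)
    assume "\<not> degree h > 0"
    hence "h = [:coeff h 0:]" by (metis degree_0_id neq0_conv)
    hence "poly h \<gamma> = coeff h 0" by (metis poly_pCons poly_0 mult_zero_right add.right_neutral)
    moreover have "coeff h 0 \<noteq> 0" using hnz \<open>h = [:coeff h 0:]\<close> by (metis pCons_0_0)
    ultimately show False using hroot by simp
  qed
  have pK: "\<forall>i. coeff p i \<in> K" using irr unfolding irreducible_over_def by (elim conjE)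
  obtain S where S: "\<forall>i. coeff S i \<in> K" "p = h * S"
    using div_K[OF hnz hK hroot hmin pK root] by blast
  have pnz: "p \<noteq> 0" using deg_p r_gt4 by auto
  hence Snz: "S \<noteq> 0" using S(2) by auto
  have "degree p = degree h + degree S" using S(2) hnz Snz by (simp add: degree_mult_eq)
  hence "degree S > 0" using deg_p r_gt4 dh by linarith
  moreover have "degree h = 0 \<or> degree S = 0"
  proof -
    have "\<forall>f g. (\<forall>i. coeff f i \<in> K) \<longrightarrow> (\<forall>i. coeff g i \<in> K) \<longrightarrow> p = f * g
        \<longrightarrow> degree f = 0 \<or> degree g = 0" using irr unfolding irreducible_over_def by (elim conjE)
    note X = spec[OF spec[OF this, of h], of S]
    show ?thesis by (rule mp[OF mp[OF mp[OF X hK] S(1)] S(2)])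
  qed
  ultimately show False using dhpos by simp
qed

lemma indep5:
  assumes "a0 \<in> K" "a1 \<in> K" "a2 \<in> K" "a3 \<in> K" "a4 \<in> K"
    and "a0 + a1 * \<gamma> + a2 * \<gamma>^2 + a3 * \<gamma>^3 + a4 * \<gamma>^4 = 0"
  shows "a0 = 0 \<and> a1 = 0 \<and> a2 = 0 \<and> a3 = 0 \<and> a4 = 0"
proof -
  define c where "c = (\<lambda>i. [a0, a1, a2, a3, a4] ! i)"
  have "\<forall>i<5. c i \<in> K" using assms(1-5) unfolding c_def
    by (auto simp: less_Suc_eq numeral_eq_Suc)
  moreover have "(\<Sum>i<5. c i * \<gamma> ^ i) = 0" using assms(6) unfolding c_def
    by (simp add: numeral_eq_Suc lessThan_Suc add_ac)
  ultimately have "\<forall>i<5. c i = 0" by (rule indep_fun)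
  thus ?thesis unfolding c_def by (auto dest: spec[of _ 0] spec[of _ 1] spec[of _ 2] spec[of _ 3] spec[of _ 4])
qed

end

lemma expand_id:
  fixes a1 b1 a2 b2 c1 d1 c2 d2 t d t' d' g :: "'a::comm_ring_1"
  shows "(a1 + b1 * t' * g + b1 * d' * g^2) * (c2 + d2 * t * g + d2 * d * g^2)
       - (a2 + b2 * t' * g + b2 * d' * g^2) * (c1 + d1 * t * g + d1 * d * g^2)
     = (a1 * c2 - a2 * c1)
       + (a1 * d2 * t + b1 * t' * c2 - a2 * d1 * t - b2 * t' * c1) * g
       + (a1 * d2 * d + b1 * d' * c2 + b1 * d2 * t' * t - (a2 * d1 * d + b2 * d' * c1 + b2 * d1 * t' * t)) * g^2
       + (b1 * d2 * (t' * d + d' * t) - b2 * d1 * (t' * d + d' * t)) * g^3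
       + (b1 * d2 * d' * d - b2 * d1 * d' * d) * g^4"
  by (simp add: eval_nat_numeral algebra_simps)


context cset
begin

definition fr :: "'a \<Rightarrow> 'a" where "fr u = u ^ q + u"

definition elem :: "'a \<Rightarrow> 'a \<Rightarrow> 'a \<Rightarrow> 'a" where
  "elem u t d = u + fr u * t * \<gamma> + fr u * d * \<gamma>\<^sup>2"

lemma U_td_eq: "U_td q k \<gamma> t d = (\<lambda>u. elem u t d) ` K"
  unfolding U_td_def elem_def fr_def by simp

lemma fr_K: "u \<in> K \<Longrightarrow> fr u \<in> K"
  unfolding fr_def by (intro Sf_add Sf_pow)

lemma fr_add: "fr (u + v) = fr u + fr v"
  unfolding fr_def by (simp add: frob_add1 algebra_simps)

lemma fr_Fq: "c \<in> Fq \<Longrightarrow> fr (c * u) = c * fr u"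
  unfolding fr_def by (simp add: frob_Fq_mult algebra_simps Fq_mem)

lemma fr_0[simp]: "fr 0 = 0"
  unfolding fr_def using q_gt1 by (simp add: zero_power)

lemma elem_add: "elem (u + v) t d = elem u t d + elem v t d"
  unfolding elem_def by (simp add: fr_add algebra_simps)

lemma elem_Fq: "c \<in> Fq \<Longrightarrow> elem (c * u) t d = c * elem u t d"
  unfolding elem_def by (simp add: fr_Fq algebra_simps)

lemma elem_0[simp]: "elem 0 t d = 0"
  unfolding elem_def by simp

lemma elem_eq0:
  assumes "u \<in> K" "t \<in> K" "d \<in> K" "elem u t d = 0"
  shows "u = 0"
proof -
  have "u + (fr u * t) * \<gamma> + (fr u * d) * \<gamma>^2 + 0 * \<gamma>^3 + 0 * \<gamma>^4 = 0"
    using assms(4) unfolding elem_def by simp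
  thus ?thesis using indep5[of u "fr u * t" "fr u * d" 0 0] assms(1-3)
    by (auto intro: Sf_mult fr_K)
qed

lemma elem_inj:
  assumes "u \<in> K" "v \<in> K" "t \<in> K" "d \<in> K" "elem u t d = elem v t d"
  shows "u = v"
proof -
  have "elem (u - v) t d + elem v t d = elem u t d" by (simp add: elem_add[symmetric])
  hence "elem (u - v) t d = 0" using assms(5) by simp
  hence "u - v = 0" using elem_eq0 assms(1-4) by (blast intro: Sf_diff)
  thus ?thesis by simp
qed

lemma key:
  assumes K: "u1 \<in> K" "u2 \<in> K" "w1 \<in> K" "w2 \<in> K" "t \<in> K" "d \<in> K" "t' \<in> K" "d' \<in> K"
    and nz: "d \<noteq> 0" "d' \<noteq> 0" "\<alpha> \<noteq> 0"
    and h1: "\<alpha> * elem u1 t d = elem w1 t' d'"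
    and h2: "\<alpha> * elem u2 t d = elem w2 t' d'"
    and D: "u1 * u2 ^ q \<noteq> u2 * u1 ^ q"
  shows "\<alpha> \<in> Fq \<and> t = t' \<and> d = d'"
proof -
  define D where "D = u1 * fr u2 - u2 * fr u1"
  have DD: "D = u1 * u2 ^ q - u2 * u1 ^ q" unfolding D_def fr_def by (simp add: algebra_simps)
  hence Dnz: "D \<noteq> 0" using D by simp
  have u1nz: "u1 \<noteq> 0" using D q_gt1 by (auto simp: zero_power)
  have "elem w1 t' d' * elem u2 t d = elem w2 t' d' * elem u1 t d"
    unfolding h1[symmetric] h2[symmetric] by (simp add: algebra_simps)
  hence "elem w1 t' d' * elem u2 t d - elem w2 t' d' * elem u1 t d = 0" by simp
  note E = this[unfolded elem_def expand_id]
  have fK: "fr u1 \<in> K" "fr u2 \<in> K" "fr w1 \<in> K" "fr w2 \<in> K" using K by (auto intro: fr_K)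
  have A: "w1 * u2 - w2 * u1 = 0"
    "w1 * fr u2 * t + fr w1 * t' * u2 - w2 * fr u1 * t - fr w2 * t' * u1 = 0"
    "w1 * fr u2 * d + fr w1 * d' * u2 + fr w1 * fr u2 * t' * t - (w2 * fr u1 * d + fr w2 * d' * u1 + fr w2 * fr u1 * t' * t) = 0"
    "fr w1 * fr u2 * d' * d - fr w2 * fr u1 * d' * d = 0"
    using indep5[OF _ _ _ _ _ E] K fK by (auto intro!: Sf_diff Sf_add Sf_mult)
  define \<mu> where "\<mu> = w1 / u1"
  have w1: "w1 = \<mu> * u1" unfolding \<mu>_def using u1nz by simp
  have w2: "w2 = \<mu> * u2" using A(1) u1nz unfolding \<mu>_def by (simp add: field_simps)
  have A4: "fr w1 * fr u2 = fr w2 * fr u1" using A(4) nz(1,2) by simp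
  obtain \<rho> where rho: "fr w1 = \<rho> * fr u1" "fr w2 = \<rho> * fr u2"
  proof (cases "fr u1 = 0")
    case False
    show ?thesis
      by (rule that[of "fr w1 / fr u1"]) (use False A4 in \<open>auto simp: field_simps\<close>)
  next
    case True
    hence "fr u2 \<noteq> 0" using Dnz unfolding D_def by auto
    thus ?thesis
      by (intro that[of "fr w2 / fr u2"]) (use True A4 in \<open>auto simp: field_simps\<close>)
  qed
  have "(\<mu> * t - \<rho> * t') * D = 0" using A(2) unfolding D_def rho unfolding w1 w2 by (simp add: algebra_simps)
  hence tt: "\<mu> * t = \<rho> * t'" using Dnz by simp
  have "(\<mu> * d - \<rho> * d') * D = 0" using A(3) unfolding D_def rho unfolding w1 w2 by (simp add: algebra_simps)
  hence dd: "\<mu> * d = \<rho> * d'" using Dnz by simp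
  have "elem w1 t' d' = \<mu> * u1 + fr u1 * (\<rho> * t') * \<gamma> + fr u1 * (\<rho> * d') * \<gamma>\<^sup>2"
    unfolding elem_def rho(1) unfolding w1 by (simp add: algebra_simps)
  also have "\<dots> = \<mu> * elem u1 t d" unfolding elem_def tt[symmetric] dd[symmetric] by (simp add: algebra_simps)
  finally have "\<alpha> * elem u1 t d = \<mu> * elem u1 t d" using h1 by simp
  moreover have "elem u1 t d \<noteq> 0" using elem_eq0 K(1,5,6) u1nz by blast
  ultimately have am: "\<alpha> = \<mu>" by simp
  have fe: "\<mu> ^ q * u ^ q + \<mu> * u = \<rho> * u ^ q + \<rho> * u" if "fr (\<mu> * u) = \<rho> * fr u" for u
    using that unfolding fr_def by (simp add: power_mult_distrib algebra_simps)
  have f1: "\<mu> ^ q * u1 ^ q + \<mu> * u1 = \<rho> * u1 ^ q + \<rho> * u1" using fe[of u1] rho(1)[unfolded w1] by simp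
  have f2: "\<mu> ^ q * u2 ^ q + \<mu> * u2 = \<rho> * u2 ^ q + \<rho> * u2" using fe[of u2] rho(2)[unfolded w2] by simp
  have rq: "\<rho> = \<mu> ^ q"
  proof (rule ccontr)
    assume ne: "\<rho> \<noteq> \<mu> ^ q"
    define s where "s = (\<rho> - \<mu>) / (\<mu> ^ q - \<rho>)"
    have "u1 ^ q = s * u1" using f1 ne unfolding s_def by (simp add: field_simps)
    moreover have "u2 ^ q = s * u2" using f2 ne unfolding s_def by (simp add: field_simps)
    ultimately have "D = 0" unfolding DD by simp
    thus False using Dnz by simp
  qed
  have "\<mu> * u1 = \<mu> ^ q * u1" using f1 rq by simp
  hence mq: "\<mu> ^ q = \<mu>" using u1nz by simp
  have mnz: "\<mu> \<noteq> 0" using am nz(3) by simp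
  have "t = t'" using tt rq mq mnz by simp
  moreover have "d = d'" using dd rq mq mnz by simp
  moreover have "\<alpha> \<in> Fq" using am mq by (simp add: Fq_mem)
  ultimately show ?thesis by simp
qed

end

context cset
begin

abbreviation Uc :: "'a \<Rightarrow> 'a \<Rightarrow> 'a set" where "Uc t d \<equiv> U_td q k \<gamma> t d"

abbreviation sc :: "'a \<Rightarrow> 'a set \<Rightarrow> 'a set" where "sc a V \<equiv> (\<lambda>x. a * x) ` V"

lemma U_subspace:
  assumes "t \<in> K" "d \<in> K"
  shows "Fq_subspace q (Uc t d)"
  unfolding Fq_subspace_def U_td_eq
proof (intro conjI ballI)
  show "0 \<in> (\<lambda>u. elem u t d) ` K" by (rule image_eqI[of _ _ 0]) auto
next
  fix x y assume "x \<in> (\<lambda>u. elem u t d) ` K" "y \<in> (\<lambda>u. elem u t d) ` K"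
  then obtain u v where "u \<in> K" "v \<in> K" "x = elem u t d" "y = elem v t d" by auto
  thus "x + y \<in> (\<lambda>u. elem u t d) ` K"
    by (intro image_eqI[of _ _ "u + v"]) (auto simp: elem_add intro: Sf_add)
next
  fix c x assume "c \<in> Fq" "x \<in> (\<lambda>u. elem u t d) ` K"
  then obtain u where "u \<in> K" "x = elem u t d" by auto
  thus "c * x \<in> (\<lambda>u. elem u t d) ` K" using \<open>c \<in> Fq\<close>
    by (intro image_eqI[of _ _ "c * u"]) (auto simp: elem_Fq intro: Sf_mult Sf1_sub)
qed

lemma card_U:
  assumes "t \<in> K" "d \<in> K"
  shows "card (Uc t d) = q ^ k"
proof -
  have "inj_on (\<lambda>u. elem u t d) K" using elem_inj assms by (auto intro: inj_onI)
  thus ?thesis unfolding U_td_eq by (simp add: card_image card_K)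
qed

lemma sc_subspace:
  assumes "Fq_subspace q V"
  shows "Fq_subspace q (sc a V)"
  unfolding Fq_subspace_def
proof (intro conjI ballI)
  show "0 \<in> sc a V" using assms unfolding Fq_subspace_def by (auto intro: image_eqI[of _ _ 0])
next
  fix x y assume "x \<in> sc a V" "y \<in> sc a V"
  then obtain u v where "u \<in> V" "v \<in> V" "x = a * u" "y = a * v" by auto
  thus "x + y \<in> sc a V" using assms unfolding Fq_subspace_def
    by (intro image_eqI[of _ _ "u + v"]) (auto simp: algebra_simps)
next
  fix c x assume "c \<in> Fq" "x \<in> sc a V"
  then obtain u where "u \<in> V" "x = a * u" by auto
  thus "c * x \<in> sc a V" using assms \<open>c \<in> Fq\<close> unfolding Fq_subspace_def
    by (intro image_eqI[of _ _ "c * u"]) (auto simp: algebra_simps)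
qed

lemma card_sc:
  assumes "a \<noteq> 0"
  shows "card (sc a V) = card V"
  using assms by (intro card_image inj_onI) auto

lemma scale_Fq:
  assumes "c \<in> Fq" "c \<noteq> 0" "Fq_subspace q V"
  shows "sc c V = V"
proof
  show "sc c V \<subseteq> V" using assms unfolding Fq_subspace_def by auto
next
  show "V \<subseteq> sc c V"
  proof
    fix x assume "x \<in> V"
    hence "inverse c * x \<in> V" using assms Fq_inverse unfolding Fq_subspace_def by blast
    moreover have "x = c * (inverse c * x)" using assms(2) by simp
    ultimately show "x \<in> sc c V" by blast
  qed
qed

lemma inter_key:
  assumes P: "t \<in> K - {0}" "d \<in> K - {0}" "t' \<in> K - {0}" "d' \<in> K - {0}"
    and ab: "\<alpha> \<noteq> 0" "\<beta> \<noteq> 0"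
    and x1: "x1 \<in> sc \<alpha> (Uc t d)" "x1 \<in> sc \<beta> (Uc t' d')"
    and x2: "x2 \<in> sc \<alpha> (Uc t d)" "x2 \<in> sc \<beta> (Uc t' d')"
    and x1nz: "x1 \<noteq> 0" and indep: "\<forall>c\<in>Fq. x2 \<noteq> c * x1"
  shows "\<alpha> / \<beta> \<in> Fq \<and> t = t' \<and> d = d'"
proof -
  obtain u1 where u1: "u1 \<in> K" "x1 = \<alpha> * elem u1 t d" using x1(1) unfolding U_td_eq by auto
  obtain u2 where u2: "u2 \<in> K" "x2 = \<alpha> * elem u2 t d" using x2(1) unfolding U_td_eq by auto
  obtain w1 where w1: "w1 \<in> K" "x1 = \<beta> * elem w1 t' d'" using x1(2) unfolding U_td_eq by auto
  obtain w2 where w2: "w2 \<in> K" "x2 = \<beta> * elem w2 t' d'" using x2(2) unfolding U_td_eq by auto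
  have h1: "(\<alpha> / \<beta>) * elem u1 t d = elem w1 t' d'" using u1(2) w1(2) ab by (simp add: field_simps)
  have h2: "(\<alpha> / \<beta>) * elem u2 t d = elem w2 t' d'" using u2(2) w2(2) ab by (simp add: field_simps)
  have u1nz: "u1 \<noteq> 0" using x1nz u1(2) by auto
  have D: "u1 * u2 ^ q \<noteq> u2 * u1 ^ q"
  proof
    assume eq: "u1 * u2 ^ q = u2 * u1 ^ q"
    define c where "c = u2 / u1"
    have "c ^ q = u2 ^ q / u1 ^ q" unfolding c_def by (simp add: power_divide)
    also have "\<dots> = c" unfolding c_def using eq u1nz by (simp add: field_simps)
    finally have cF: "c \<in> Fq" by (simp add: Fq_mem)
    have "u2 = c * u1" unfolding c_def using u1nz by simp
    hence "x2 = c * x1" using u1(2) u2(2) elem_Fq[OF cF] by (simp add: algebra_simps)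
    thus False using indep cF by blast
  qed
  have "\<alpha> / \<beta> \<noteq> 0" using ab by simp
  thus ?thesis using key[OF u1(1) u2(1) w1(1) w2(1) _ _ _ _ _ _ _ h1 h2 D] P by auto
qed

lemma exists_indep_pair:
  assumes "Fq_subspace q V" "card V = q ^ k"
  shows "\<exists>x1\<in>V. \<exists>x2\<in>V. x1 \<noteq> 0 \<and> (\<forall>c\<in>Fq. x2 \<noteq> c * x1)"
proof -
  have "q ^ 1 < q ^ k" by (rule power_strict_increasing) (use k_ge2 q_gt1 in auto)
  hence qk: "q < q ^ k" by simp
  have "V \<noteq> {0}" using assms(2) qk q_gt1 by auto
  moreover have "0 \<in> V" using assms(1) unfolding Fq_subspace_def by blast
  ultimately obtain x1 where x1: "x1 \<in> V" "x1 \<noteq> 0" by blast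
  have "card ((\<lambda>c. c * x1) ` Fq) \<le> card Fq" by (rule card_image_le) simp
  hence "card ((\<lambda>c. c * x1) ` Fq) < card V" using card_Fq assms(2) qk by simp
  hence "\<not> V \<subseteq> (\<lambda>c. c * x1) ` Fq" using card_mono[of "(\<lambda>c. c * x1) ` Fq" V] by auto
  then obtain x2 where "x2 \<in> V" "x2 \<notin> (\<lambda>c. c * x1) ` Fq" by blast
  thus ?thesis using x1 by blast
qed

end

context cset
begin

abbreviation P2 :: "('a \<times> 'a) set" where "P2 \<equiv> (K - {0}) \<times> (K - {0})"

lemma orbit_eq: "orbit V = (\<lambda>\<alpha>. sc \<alpha> V) ` (UNIV - {0})"
  unfolding orbit_def by auto

lemma sc_sc: "sc a (sc b V) = sc (a * b) V"
  by (auto simp: image_image mult.assoc)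

lemma sc_props:
  assumes "t \<in> K" "d \<in> K"
  shows "Fq_subspace q (sc a (Uc t d))" "a \<noteq> 0 \<Longrightarrow> card (sc a (Uc t d)) = q ^ k"
  using sc_subspace[OF U_subspace[OF assms]] card_sc card_U[OF assms] by auto

lemma fiber_eq:
  assumes "t \<in> K - {0}" "d \<in> K - {0}" "\<beta> \<noteq> 0"
  shows "{\<alpha>. \<alpha> \<noteq> 0 \<and> sc \<alpha> (Uc t d) = sc \<beta> (Uc t d)} = (\<lambda>c. c * \<beta>) ` (Fq - {0})"
proof (intro set_eqI iffI)
  fix \<alpha> assume "\<alpha> \<in> {\<alpha>. \<alpha> \<noteq> 0 \<and> sc \<alpha> (Uc t d) = sc \<beta> (Uc t d)}"
  hence a: "\<alpha> \<noteq> 0" "sc \<alpha> (Uc t d) = sc \<beta> (Uc t d)" by auto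
  obtain x1 x2 where x: "x1 \<in> sc \<alpha> (Uc t d)" "x2 \<in> sc \<alpha> (Uc t d)" "x1 \<noteq> 0" "\<forall>c\<in>Fq. x2 \<noteq> c * x1"
    using exists_indep_pair[OF sc_props(1) sc_props(2)[OF _ _ a(1)]] assms by blast
  have "\<alpha> / \<beta> \<in> Fq"
    using inter_key[OF assms(1,2) assms(1,2) a(1) assms(3) x(1) _ x(2) _ x(3,4)] x a(2) by auto
  moreover have "\<alpha> = (\<alpha> / \<beta>) * \<beta>" "\<alpha> / \<beta> \<noteq> 0" using assms(3) a(1) by auto
  ultimately show "\<alpha> \<in> (\<lambda>c. c * \<beta>) ` (Fq - {0})" by blast
next
  fix \<alpha> assume "\<alpha> \<in> (\<lambda>c. c * \<beta>) ` (Fq - {0})"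
  then obtain c where c: "c \<in> Fq" "c \<noteq> 0" "\<alpha> = c * \<beta>" by auto
  have "sc \<alpha> (Uc t d) = sc \<beta> (sc c (Uc t d))" unfolding sc_sc c(3) by (simp add: mult.commute)
  also have "sc c (Uc t d) = Uc t d" using scale_Fq[OF c(1,2) U_subspace] assms by auto
  finally show "\<alpha> \<in> {\<alpha>. \<alpha> \<noteq> 0 \<and> sc \<alpha> (Uc t d) = sc \<beta> (Uc t d)}" using c assms(3) by auto
qed

lemma card_orbit:
  assumes "t \<in> K - {0}" "d \<in> K - {0}"
  shows "card (orbit (Uc t d)) = (q ^ N - 1) div (q - 1)"
proof -
  define \<phi> where "\<phi> = (\<lambda>\<alpha>. sc \<alpha> (Uc t d))"
  define fib where "fib = (\<lambda>Ob. {\<alpha>. \<alpha> \<noteq> 0 \<and> \<phi> \<alpha> = Ob})"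
  have un: "UNIV - {0} = (\<Union>Ob\<in>orbit (Uc t d). fib Ob)"
    unfolding orbit_eq fib_def \<phi>_def by auto
  have cf: "card (fib Ob) = q - 1" if Obin: "Ob \<in> orbit (Uc t d)" for Ob
  proof -
    obtain \<beta> where b: "\<beta> \<noteq> 0" "Ob = \<phi> \<beta>" using Obin unfolding orbit_eq \<phi>_def by auto
    have "fib Ob = (\<lambda>c. c * \<beta>) ` (Fq - {0})" unfolding fib_def b(2) \<phi>_def
      by (rule fiber_eq[OF assms b(1)])
    also have "card \<dots> = card (Fq - {0})" using b(1) by (intro card_image inj_onI) auto
    also have "\<dots> = q - 1" by (simp add: card_Fq)
    finally show ?thesis .
  qed
  have "q ^ N - 1 = card (UNIV - {0::'a})" using card_F by (simp add: card_Diff_singleton)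
  also have "\<dots> = (\<Sum>Ob\<in>orbit (Uc t d). card (fib Ob))" unfolding un
    by (rule card_UN_disjoint) (auto simp: fib_def)
  also have "\<dots> = card (orbit (Uc t d)) * (q - 1)" using cf by simp
  finally have "q ^ N - 1 = card (orbit (Uc t d)) * (q - 1)" .
  thus ?thesis using q_gt1 by simp
qed

lemma orbit_disjoint:
  assumes "(t, d) \<in> P2" "(t', d') \<in> P2" "(t, d) \<noteq> (t', d')"
  shows "orbit (Uc t d) \<inter> orbit (Uc t' d') = {}"
proof (rule ccontr)
  assume "orbit (Uc t d) \<inter> orbit (Uc t' d') \<noteq> {}"
  then obtain \<alpha> \<beta> where ab: "\<alpha> \<noteq> 0" "\<beta> \<noteq> 0" "sc \<alpha> (Uc t d) = sc \<beta> (Uc t' d')"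
    unfolding orbit_eq by auto
  obtain x1 x2 where x: "x1 \<in> sc \<alpha> (Uc t d)" "x2 \<in> sc \<alpha> (Uc t d)" "x1 \<noteq> 0" "\<forall>c\<in>Fq. x2 \<noteq> c * x1"
    using exists_indep_pair[OF sc_props(1) sc_props(2)[OF _ _ ab(1)]] assms by blast
  have "t = t' \<and> d = d'"
    using inter_key[OF _ _ _ _ ab(1,2) x(1) _ x(2) _ x(3,4)] x ab(3) assms(1,2) by auto
  thus False using assms(3) by simp
qed

end

context cset
begin

lemma card_ker_fr: "card {y. fr y = 0} \<le> q"
proof -
  let ?P = "monom (1::'a) q + monom 1 1"
  have "coeff ?P q = 1" using q_gt1 by (simp add: coeff_monom)
  hence nz: "?P \<noteq> 0" by (metis coeff_0 zero_neq_one)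
  have dg: "degree ?P \<le> q" using q_gt1 by (intro degree_add_le) (auto intro: order.trans[OF degree_monom_le])
  have "{y. fr y = 0} = {x. poly ?P x = 0}" by (simp add: poly_monom fr_def)
  also have "card \<dots> \<le> degree ?P" by (rule card_poly_roots_bound[OF nz])
  finally show ?thesis using dg by simp
qed

lemma C_mem:
  assumes "A \<in> (\<Union>(\<tau>, \<delta>) \<in> P2. orbit (Uc \<tau> \<delta>))"
  shows "\<exists>t d \<alpha>. t \<in> K - {0} \<and> d \<in> K - {0} \<and> \<alpha> \<noteq> 0 \<and> A = sc \<alpha> (Uc t d)"
  using assms unfolding orbit_def by blast

lemma inter_subspace: "Fq_subspace q A \<Longrightarrow> Fq_subspace q B \<Longrightarrow> Fq_subspace q (A \<inter> B)"
  unfolding Fq_subspace_def by blast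

lemma inter_struct:
  assumes P: "t \<in> K - {0}" "d \<in> K - {0}" "t' \<in> K - {0}" "d' \<in> K - {0}"
    and ab: "\<alpha> \<noteq> 0" "\<beta> \<noteq> 0"
    and A: "A = sc \<alpha> (Uc t d)" and B: "B = sc \<beta> (Uc t' d')" and AB: "A \<noteq> B"
    and x1: "x1 \<in> A \<inter> B" "x1 \<noteq> 0"
  shows "A \<inter> B = (\<lambda>c. c * x1) ` Fq"
proof
  show "A \<inter> B \<subseteq> (\<lambda>c. c * x1) ` Fq"
  proof
    fix x2 assume x2: "x2 \<in> A \<inter> B"
    show "x2 \<in> (\<lambda>c. c * x1) ` Fq"
    proof (rule ccontr)
      assume "x2 \<notin> (\<lambda>c. c * x1) ` Fq"
      hence ind: "\<forall>c\<in>Fq. x2 \<noteq> c * x1" by blast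
      have k: "\<alpha> / \<beta> \<in> Fq \<and> t = t' \<and> d = d'"
        using inter_key[OF P ab _ _ _ _ x1(2) ind] x1 x2 A B by blast
      have "A = sc \<beta> (sc (\<alpha> / \<beta>) (Uc t d))" unfolding A sc_sc using ab(2) by simp
      also have "sc (\<alpha> / \<beta>) (Uc t d) = Uc t d"
      proof (rule scale_Fq)
        show "\<alpha> / \<beta> \<in> Fq" using k by blast
        show "\<alpha> / \<beta> \<noteq> 0" using ab by simp
        show "Fq_subspace q (Uc t d)" using P by (intro U_subspace) auto
      qed
      finally have "A = B" unfolding B using k by simp
      thus False using AB by simp
    qed
  qed
next
  have sA: "Fq_subspace q A" "Fq_subspace q B" unfolding A B using sc_props(1) P by auto
  show "(\<lambda>c. c * x1) ` Fq \<subseteq> A \<inter> B" using sA x1 unfolding Fq_subspace_def by auto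
qed

lemma C_props:
  assumes "A \<in> (\<Union>(\<tau>, \<delta>) \<in> P2. orbit (Uc \<tau> \<delta>))"
  shows "Fq_subspace q A" "Fq_dim q A = k"
proof -
  obtain t d \<alpha> where h: "t \<in> K - {0}" "d \<in> K - {0}" "\<alpha> \<noteq> 0" "A = sc \<alpha> (Uc t d)"
    using C_mem[OF assms] by blast
  show "Fq_subspace q A" using h sc_props(1) by auto
  thus "Fq_dim q A = k" using h sc_props(2) dim_eq by auto
qed

lemma dist_props:
  assumes "A \<in> (\<Union>(\<tau>, \<delta>) \<in> P2. orbit (Uc \<tau> \<delta>))" "B \<in> (\<Union>(\<tau>, \<delta>) \<in> P2. orbit (Uc \<tau> \<delta>))"
    and "A \<noteq> B"
  shows "subspace_dist q A B \<ge> 2 * k - 2" "A \<inter> B \<noteq> {0} \<Longrightarrow> subspace_dist q A B = 2 * k - 2"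
proof -
  obtain t d \<alpha> where a: "t \<in> K - {0}" "d \<in> K - {0}" "\<alpha> \<noteq> 0" "A = sc \<alpha> (Uc t d)"
    using C_mem[OF assms(1)] by blast
  obtain t' d' \<beta> where b: "t' \<in> K - {0}" "d' \<in> K - {0}" "\<beta> \<noteq> 0" "B = sc \<beta> (Uc t' d')"
    using C_mem[OF assms(2)] by blast
  have sub: "Fq_subspace q (A \<inter> B)" using C_props(1)[OF assms(1)] C_props(1)[OF assms(2)] inter_subspace by blast
  have dims: "Fq_dim q A = k" "Fq_dim q B = k" using C_props assms by auto
  have "0 \<in> A \<inter> B" using sub unfolding Fq_subspace_def by blast
  have case1: "subspace_dist q A B = 2 * k - 2" if ne: "A \<inter> B \<noteq> {0}"
  proof -
    obtain x1 where x1: "x1 \<in> A \<inter> B" "x1 \<noteq> 0" using ne \<open>0 \<in> A \<inter> B\<close> by blast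
    have eq: "A \<inter> B = (\<lambda>c. c * x1) ` Fq" by (rule inter_struct[OF a(1,2) b(1,2) a(3) b(3) a(4) b(4) assms(3) x1])
    have "card (A \<inter> B) = q" unfolding eq using x1(2) card_Fq by (subst card_image) (auto intro: inj_onI)
    hence "Fq_dim q (A \<inter> B) = 1" using dim_eq[OF sub, of 1] by simp
    thus ?thesis unfolding subspace_dist_def dims by simp
  qed
  show "A \<inter> B \<noteq> {0} \<Longrightarrow> subspace_dist q A B = 2 * k - 2" by (rule case1)
  show "subspace_dist q A B \<ge> 2 * k - 2"
  proof (cases "A \<inter> B = {0}")
    case True
    hence "Fq_dim q (A \<inter> B) = 0" using dim_eq[OF sub, of 0] by simp
    thus ?thesis unfolding subspace_dist_def dims by simp
  qed (use case1 in simp)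
qed

end

context cset
begin

lemma exists_close_pair:
  "\<exists>A B. A \<in> (\<Union>(\<tau>, \<delta>) \<in> P2. orbit (Uc \<tau> \<delta>)) \<and> B \<in> (\<Union>(\<tau>, \<delta>) \<in> P2. orbit (Uc \<tau> \<delta>))
     \<and> A \<noteq> B \<and> A \<inter> B \<noteq> {0}"
proof -
  have "q ^ 1 < q ^ k" by (rule power_strict_increasing) (use k_ge2 q_gt1 in auto)
  hence qk: "q < q ^ k" by simp
  have "q ^ 2 \<le> q ^ k" by (rule power_increasing) (use k_ge2 q_gt1 in auto)
  moreover have "2 * q \<le> q ^ 2" using q_gt1 by (simp add: power2_eq_square)
  ultimately have q2: "2 * q \<le> q ^ k" by linarith
  have "\<not> K \<subseteq> {y. fr y = 0}"
  proof
    assume "K \<subseteq> {y. fr y = 0}"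
    hence "card K \<le> card {y. fr y = 0}" by (intro card_mono) auto
    thus False using card_ker_fr card_K qk by simp
  qed
  then obtain u where u: "u \<in> K" "fr u \<noteq> 0" by blast
  have unz: "u \<noteq> 0" using u(2) by auto
  define Z where "Z = {a. fr (a * u) = 0}"
  have "Z \<subseteq> (\<lambda>y. y / u) ` {y. fr y = 0}"
  proof
    fix a assume "a \<in> Z"
    thus "a \<in> (\<lambda>y. y / u) ` {y. fr y = 0}" unfolding Z_def using unz
      by (intro image_eqI[of _ _ "a * u"]) auto
  qed
  hence "card Z \<le> card ((\<lambda>y. y / u) ` {y. fr y = 0})" by (intro card_mono) auto
  also have "\<dots> \<le> card {y. fr y = 0}" by (rule card_image_le) auto
  finally have cZ: "card Z \<le> q" using card_ker_fr by linarith
  have "0 \<in> Fq \<inter> Z" unfolding Z_def by simp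
  hence "card (Fq \<inter> Z) \<ge> 1" by (metis One_nat_def Suc_leI card_gt_0_iff empty_iff finite)
  moreover have "card (Fq \<union> Z) + card (Fq \<inter> Z) = card Fq + card Z" using card_Un_Int[of Fq Z] by simp
  ultimately have "card (Fq \<union> Z) < card K" using cZ card_Fq card_K q2 by linarith
  hence "\<not> K \<subseteq> Fq \<union> Z" using card_mono[of "Fq \<union> Z" K] by auto
  then obtain \<alpha> where al: "\<alpha> \<in> K" "\<alpha> \<notin> Fq" "fr (\<alpha> * u) \<noteq> 0" unfolding Z_def by blast
  have anz: "\<alpha> \<noteq> 0" using al(2) by auto
  define lam where "lam = \<alpha> * fr u / fr (\<alpha> * u)"
  have lK: "lam \<in> K - {0}" unfolding lam_def using al u anz
    by (auto intro!: Sf_divide Sf_mult fr_K)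
  have oneK: "(1::'a) \<in> K - {0}" by simp
  define A where "A = sc \<alpha> (Uc 1 1)"
  define B where "B = sc 1 (Uc lam lam)"
  have "A \<in> orbit (Uc 1 1)" unfolding A_def orbit_def using anz by (intro CollectI exI[of _ \<alpha>]) simp
  hence AC: "A \<in> (\<Union>(\<tau>, \<delta>) \<in> P2. orbit (Uc \<tau> \<delta>))" using oneK by (intro UN_I[of "(1, 1)"]) auto
  have "B \<in> orbit (Uc lam lam)" unfolding B_def orbit_def by (intro CollectI exI[of _ 1]) simp
  hence BC: "B \<in> (\<Union>(\<tau>, \<delta>) \<in> P2. orbit (Uc \<tau> \<delta>))" using lK by (intro UN_I[of "(lam, lam)"]) auto
  have flam: "fr (\<alpha> * u) * lam = \<alpha> * fr u" unfolding lam_def using al(3) by simp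
  have "elem (\<alpha> * u) lam lam = \<alpha> * u + (fr (\<alpha> * u) * lam) * \<gamma> + (fr (\<alpha> * u) * lam) * \<gamma>\<^sup>2"
    unfolding elem_def by (simp only: mult.assoc)
  also have "\<dots> = \<alpha> * u + (\<alpha> * fr u) * \<gamma> + (\<alpha> * fr u) * \<gamma>\<^sup>2" by (simp only: flam)
  also have "\<dots> = \<alpha> * elem u 1 1" unfolding elem_def by (simp add: algebra_simps)
  finally have ee: "elem (\<alpha> * u) lam lam = \<alpha> * elem u 1 1" .
  have xA: "\<alpha> * elem u 1 1 \<in> A" unfolding A_def U_td_eq by (intro imageI u(1))
  have "elem (\<alpha> * u) lam lam \<in> Uc lam lam" unfolding U_td_eq
    by (rule image_eqI[of _ _ "\<alpha> * u"]) (use u(1) al(1) in \<open>auto intro: Sf_mult\<close>)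
  hence xB: "\<alpha> * elem u 1 1 \<in> B" unfolding B_def ee[symmetric]
    by (intro image_eqI[of _ _ "elem (\<alpha> * u) lam lam"]) auto
  have "elem u 1 1 \<noteq> 0" using elem_eq0[of u 1 1] u(1) unz by auto
  hence xnz: "\<alpha> * elem u 1 1 \<noteq> 0" using anz by simp
  have "A \<noteq> B"
  proof
    assume AB: "A = B"
    obtain x1 x2 where x: "x1 \<in> A" "x2 \<in> A" "x1 \<noteq> 0" "\<forall>c\<in>Fq. x2 \<noteq> c * x1"
      using exists_indep_pair[OF sc_props(1) sc_props(2)[OF _ _ anz]] oneK unfolding A_def by blast
    have x': "x1 \<in> sc \<alpha> (Uc 1 1)" "x1 \<in> sc 1 (Uc lam lam)" "x2 \<in> sc \<alpha> (Uc 1 1)" "x2 \<in> sc 1 (Uc lam lam)"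
      using x AB unfolding A_def B_def by auto
    have "1 = lam"
      using inter_key[OF oneK oneK lK lK anz one_neq_zero x'(1,2) x'(3,4) x(3,4)] by blast
    hence "\<alpha> * fr u = fr (\<alpha> * u)" unfolding lam_def using al(3) by (simp add: field_simps)
    hence "\<alpha> * u ^ q = \<alpha> ^ q * u ^ q" unfolding fr_def by (simp add: power_mult_distrib algebra_simps)
    moreover have "u ^ q \<noteq> 0" using unz by simp
    ultimately have "\<alpha> ^ q = \<alpha>" using unz by auto
    thus False using al(2) by (simp add: Fq_mem)
  qed
  moreover have "A \<inter> B \<noteq> {0}" using xA xB xnz by blast
  ultimately show ?thesis using AC BC by blast
qed

theorem main:
  defines "C \<equiv> (\<Union>(\<tau>, \<delta>) \<in> (subfield_of_order (q ^ k) - {0}) \<times> (subfield_of_order (q ^ k) - {0}).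
                  orbit (U_td q k \<gamma> \<tau> \<delta>))"
  shows "subspace_code q C \<and> cyclic_code C \<and> constant_dimension q C
    \<and> card C = (q ^ k - 1)\<^sup>2 * ((q ^ N - 1) div (q - 1))
    \<and> min_distance q C = 2 * k - 2"
proof (intro conjI)
  obtain A0 B0 where AB0: "A0 \<in> C" "B0 \<in> C" "A0 \<noteq> B0" "A0 \<inter> B0 \<noteq> {0}"
    using exists_close_pair unfolding C_def by blast
  show "subspace_code q C" unfolding subspace_code_def using AB0(1) C_props(1) unfolding C_def by blast
  show "cyclic_code C" unfolding cyclic_code_def C_def
    by (rule exI[of _ "(\<lambda>(\<tau>, \<delta>). Uc \<tau> \<delta>) ` P2"]) (auto simp: image_image)
  show "constant_dimension q C" unfolding constant_dimension_def using C_props(2) unfolding C_def by blast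
  have "card C = (\<Sum>pr\<in>P2. card ((\<lambda>(\<tau>, \<delta>). orbit (Uc \<tau> \<delta>)) pr))" unfolding C_def
  proof (rule card_UN_disjoint)
    show "\<forall>i\<in>P2. \<forall>j\<in>P2. i \<noteq> j \<longrightarrow> (\<lambda>(\<tau>, \<delta>). orbit (Uc \<tau> \<delta>)) i \<inter> (\<lambda>(\<tau>, \<delta>). orbit (Uc \<tau> \<delta>)) j = {}"
      using orbit_disjoint by auto
  qed auto
  also have "\<dots> = (\<Sum>pr\<in>P2. (q ^ N - 1) div (q - 1))"
  proof (rule sum.cong[OF refl])
    fix pr assume "pr \<in> P2"
    then obtain a b where "pr = (a, b)" "a \<in> K - {0}" "b \<in> K - {0}" by auto
    thus "card ((\<lambda>(\<tau>, \<delta>). orbit (Uc \<tau> \<delta>)) pr) = (q ^ N - 1) div (q - 1)"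
      using card_orbit by simp
  qed
  also have "\<dots> = (q ^ k - 1)\<^sup>2 * ((q ^ N - 1) div (q - 1))"
    by (simp add: card_cartesian_product card_Diff_singleton card_K power2_eq_square)
  finally show "card C = (q ^ k - 1)\<^sup>2 * ((q ^ N - 1) div (q - 1))" .
  let ?S = "{subspace_dist q U V | U V. U \<in> C \<and> V \<in> C \<and> U \<noteq> V}"
  show "min_distance q C = 2 * k - 2" unfolding min_distance_def
  proof (rule Min_eqI)
    have "?S \<subseteq> (\<lambda>(U, V). subspace_dist q U V) ` (C \<times> C)" by auto
    thus "finite ?S" by (rule finite_subset) auto
  next
    fix y assume "y \<in> ?S"
    then obtain U V where "U \<in> C" "V \<in> C" "U \<noteq> V" "y = subspace_dist q U V" by blast
    thus "2 * k - 2 \<le> y" using dist_props(1) unfolding C_def by blast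
  next
    have "subspace_dist q A0 B0 = 2 * k - 2" using dist_props(2) AB0 unfolding C_def by blast
    thus "2 * k - 2 \<in> ?S" unfolding mem_Collect_eq using AB0 by (intro exI[of _ A0] exI[of _ B0]) simp
  qed
qed

end

theorem lemma3p6:
  fixes q k r n :: nat and \<gamma> :: "'a::{field,finite}" and p :: "'a poly"
  assumes "prime_power q" and "k \<ge> 2" and "r > 4" and "n = r * k"
    and "card (UNIV :: 'a set) = q ^ n"
    and "irreducible_over (subfield_of_order (q ^ k)) p" and "degree p = r"
    and "poly p \<gamma> = 0"
  defines "C \<equiv> (\<Union>(\<tau>, \<delta>) \<in> (subfield_of_order (q ^ k) - {0}) \<times> (subfield_of_order (q ^ k) - {0}).
                  orbit (U_td q k \<gamma> \<tau> \<delta>))"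
  shows "subspace_code q C \<and> cyclic_code C \<and> constant_dimension q C
    \<and> card C = (q ^ k - 1)\<^sup>2 * ((q ^ n - 1) div (q - 1))
    \<and> min_distance q C = 2 * k - 2"
proof -
  obtain P m where Pm: "prime P" "m > 0" "q = P ^ m"
    using assms(1) unfolding prime_power_def by blast
  have npos: "n > 0" using assms(2,3,4) by simp
  interpret cset q P m n "TYPE('a)" k r \<gamma> p
    by unfold_locales (use Pm assms(2-8) npos in auto)
  show ?thesis unfolding C_def by (rule main)
qed

end
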